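(* Let $X$ be a set and let $X_d$ denote $X$ with the discrete topology. Then every flow $\varphi:\mathbb{R}\times 2^{X_d}_L\rightarrow 2^{X_d}_L$ is trivial, i.e. $\varphi(t,C)=C$ for all $t\in\mathbb{R}$ and all $C\in 2^{X_d}_L$.
   Context: For a set $X$ with the discrete topology, $2^X$ denotes the set of all non-empty (closed, hence all non-empty) subsets of $X$. For $U\subseteq X$ put $L_U=\{F\subseteq X \mid F\neq\emptyset,\ F\cap U\neq\emptyset\}$. The lower semifinite topology on $2^X$ is the topology having the sets $L_U$, $U$ open in $X_d$ (i.e. any subset of $X$), as a subbase; the resulting space is denoted $2^{X_d}_L$. A flow on a topological space $Y$ is a continuous map $\varphi:\mathbb{R}\times Y\to Y$ (with $\mathbb{R}$ carrying its usual topology and $\mathbb{R}\times Y$ the product topology) such that $\varphi(0,y)=y$ and $\varphi(s+t,y)=\varphi(s,\varphi(t,y))$ for all $s,t\in\mathbb{R}$, $y\in Y$. *)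

theory Defs
  imports "HOL-Analysis.Analysis"
begin

text \<open>The hyperspace 2^X of all non-empty subsets of X (all subsets are closed in X_d).\<close>
definition hyperspace :: "'a set \<Rightarrow> 'a set set" where
  "hyperspace X = {F. F \<subseteq> X \<and> F \<noteq> {}}"

definition lower_set :: "'a set \<Rightarrow> 'a set \<Rightarrow> 'a set set" where
  "lower_set X U = {F \<in> hyperspace X. F \<inter> U \<noteq> {}}"

text \<open>The lower semifinite topology on 2^{X_d}: subbase L_U, U any subset of X
  (every subset is open in the discrete topology).\<close>
definition lower_semifinite_discrete :: "'a set \<Rightarrow> 'a set topology" where
  "lower_semifinite_discrete X = topology_generated_by {lower_set X U | U. U \<subseteq> X}"

definition is_flow :: "'b topology \<Rightarrow> (real \<times> 'b \<Rightarrow> 'b) \<Rightarrow> bool" where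
  "is_flow Y \<phi> \<longleftrightarrow>
     continuous_map (prod_topology euclideanreal Y) Y \<phi> \<and>
     (\<forall>y\<in>topspace Y. \<phi> (0, y) = y) \<and>
     (\<forall>s t. \<forall>y\<in>topspace Y. \<phi> (s + t, y) = \<phi> (s, \<phi> (t, y)))"

end

theory Submission
  imports Defs
begin

lemma ts_sub: "topspace (lower_semifinite_discrete X) \<subseteq> hyperspace X"
  unfolding lower_semifinite_discrete_def topology_generated_by_topspace lower_set_def by auto

lemma gen_up:
  assumes "generate_topology_on {lower_set X U | U. U \<subseteq> X} V"
  shows "A \<in> V \<Longrightarrow> A \<subseteq> B \<Longrightarrow> B \<in> hyperspace X \<Longrightarrow> B \<in> V"
  using assms
proof (induction arbitrary: A rule: generate_topology_on.induct)
  case Empty then show ?case by simp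
next
  case (Int a b) then show ?case by blast
next
  case (UN K) then show ?case by blast
next
  case (Basis s) then show ?case unfolding lower_set_def by blast
qed

lemma open_up:
  assumes "openin (lower_semifinite_discrete X) V" "A \<in> V" "A \<subseteq> B"
    "B \<in> topspace (lower_semifinite_discrete X)"
  shows "B \<in> V"
  using gen_up[of X V A B] assms ts_sub[of X]
  unfolding lower_semifinite_discrete_def openin_topology_generated_by_iff by blast

lemma open_single:
  assumes "a \<in> X"
  shows "openin (lower_semifinite_discrete X) (lower_set X {a})"
  unfolding lower_semifinite_discrete_def
  by (rule topology_generated_by_Basis) (use assms in auto)

lemma cont_mono:
  assumes f: "continuous_map (lower_semifinite_discrete X) (lower_semifinite_discrete X) f"
    and A: "A \<in> topspace (lower_semifinite_discrete X)"
    and B: "B \<in> topspace (lower_semifinite_discrete X)" and AB: "A \<subseteq> B"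
  shows "f A \<subseteq> f B"
proof
  fix a assume a: "a \<in> f A"
  have fA: "f A \<in> hyperspace X" using f A ts_sub by (auto simp: continuous_map_def)
  then have aX: "a \<in> X" using a unfolding hyperspace_def by auto
  let ?V = "{y \<in> topspace (lower_semifinite_discrete X). f y \<in> lower_set X {a}}"
  have "openin (lower_semifinite_discrete X) ?V"
    using f open_single[OF aX] by (rule openin_continuous_map_preimage)
  moreover have "A \<in> ?V" using A fA a unfolding lower_set_def by auto
  ultimately have "B \<in> ?V" using open_up AB B by blast
  then show "a \<in> f B" unfolding lower_set_def by auto
qed

theorem mainTheorem1:
  fixes X :: "'a set" and \<phi> :: "real \<times> 'a set \<Rightarrow> 'a set"
  assumes "is_flow (lower_semifinite_discrete X) \<phi>"
  shows "\<forall>t. \<forall>C\<in>topspace (lower_semifinite_discrete X). \<phi> (t, C) = C"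
proof -
  let ?T = "lower_semifinite_discrete X"
  have c: "continuous_map (prod_topology euclideanreal ?T) ?T \<phi>"
    and z: "\<And>y. y \<in> topspace ?T \<Longrightarrow> \<phi> (0, y) = y"
    and g: "\<And>s t y. y \<in> topspace ?T \<Longrightarrow> \<phi> (s + t, y) = \<phi> (s, \<phi> (t, y))"
    using assms unfolding is_flow_def by auto
  have inT: "\<And>t y. y \<in> topspace ?T \<Longrightarrow> \<phi> (t, y) \<in> topspace ?T"
    using c by (auto simp: continuous_map_def)
  have slice: "continuous_map ?T ?T (\<lambda>y. \<phi> (t, y))" for t
  proof -
    have "continuous_map ?T (prod_topology euclideanreal ?T) (\<lambda>y. (t, y))"
      by (intro continuous_map_pairedI continuous_map_const[THEN iffD2] continuous_map_id) auto
    then show ?thesis using continuous_map_compose[OF _ c] by (simp add: o_def)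
  qed
  have mono: "\<And>t A B. A \<in> topspace ?T \<Longrightarrow> B \<in> topspace ?T \<Longrightarrow> A \<subseteq> B \<Longrightarrow> \<phi> (t, A) \<subseteq> \<phi> (t, B)"
    using cont_mono[OF slice] by blast
  have orbit: "continuous_map euclideanreal ?T (\<lambda>s. \<phi> (s, y))" if "y \<in> topspace ?T" for y
  proof -
    have "continuous_map euclideanreal (prod_topology euclideanreal ?T) (\<lambda>s. (s, y))"
      using that by (intro continuous_map_pairedI continuous_map_const[THEN iffD2] continuous_map_id) auto
    then show ?thesis using continuous_map_compose[OF _ c] by (simp add: o_def)
  qed
  have single: "\<phi> (t, {x}) = {x}" if x: "x \<in> X" for x t
  proof -
    have sT: "{x} \<in> topspace ?T"
      unfolding lower_semifinite_discrete_def topology_generated_by_topspace lower_set_def hyperspace_def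
      using x by blast
    let ?W = "{s \<in> topspace euclideanreal. \<phi> (s, {x}) \<in> lower_set X {x}}"
    have "openin euclideanreal ?W"
      using orbit[OF sT] open_single[OF x] by (rule openin_continuous_map_preimage)
    then have oW: "open ?W" by simp
    have "0 \<in> ?W" using z[OF sT] x unfolding lower_set_def hyperspace_def by auto
    then obtain e where e: "e > 0" "ball 0 e \<subseteq> ?W" using oW open_contains_ball by blast
    have mem: "x \<in> \<phi> (s, {x})" if "\<bar>s\<bar> < e" for s
      using e that unfolding lower_set_def by (auto simp: subset_iff dist_real_def)
    have small: "\<phi> (s, {x}) = {x}" if s: "\<bar>s\<bar> < e" for s
    proof
      have "x \<in> \<phi> (-s, {x})" using mem s by simp
      then have "{x} \<subseteq> \<phi> (-s, {x})" by simp
      then have "\<phi> (s, {x}) \<subseteq> \<phi> (s, \<phi> (-s, {x}))" using mono[OF sT inT[OF sT]] by blast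
      also have "\<dots> = \<phi> (0, {x})" using g[OF sT, of s "-s"] by simp
      also have "\<dots> = {x}" using z[OF sT] by blast
      finally show "\<phi> (s, {x}) \<subseteq> {x}" .
      show "{x} \<subseteq> \<phi> (s, {x})" using mem s by simp
    qed
    have pow: "\<phi> (real n * s, {x}) = {x}" if s: "\<bar>s\<bar> < e" for n s
    proof (induction n)
      case 0 then show ?case using z sT by simp
    next
      case (Suc n)
      have "\<phi> (real (Suc n) * s, {x}) = \<phi> (s + real n * s, {x})" by (simp add: algebra_simps)
      also have "\<dots> = \<phi> (s, \<phi> (real n * s, {x}))" using g[OF sT] by blast
      also have "\<dots> = {x}" using Suc small s by simp
      finally show ?case .
    qed
    obtain n :: nat where n: "\<bar>t\<bar> / e < real n" using reals_Archimedean2 by blast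
    have npos: "real n > 0" using n e by (smt (verit) divide_nonneg_pos abs_ge_zero)
    have tn: "\<bar>t\<bar> < e * real n" using n e by (simp add: pos_divide_less_eq mult.commute)
    have "\<bar>t / real n\<bar> = \<bar>t\<bar> / real n" using npos by (simp add: abs_divide)
    also have "\<dots> < e" using npos tn by (simp add: divide_less_eq)
    finally have "\<bar>t / real n\<bar> < e" .
    then have "\<phi> (real n * (t / real n), {x}) = {x}" by (rule pow)
    then show ?thesis using npos by simp
  qed
  have sup: "C \<subseteq> \<phi> (t, C)" if C: "C \<in> topspace ?T" for C t
  proof
    fix x assume xC: "x \<in> C"
    have Ch: "C \<in> hyperspace X" using C ts_sub by blast
    then have xX: "x \<in> X" using xC unfolding hyperspace_def by auto
    have sT: "{x} \<in> topspace ?T"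
      unfolding lower_semifinite_discrete_def topology_generated_by_topspace lower_set_def hyperspace_def
      using xX by blast
    have "\<phi> (t, {x}) \<subseteq> \<phi> (t, C)" using mono[OF sT C] xC by blast
    then show "x \<in> \<phi> (t, C)" using single[OF xX] by simp
  qed
  show ?thesis
  proof (intro allI ballI)
    fix t C assume C: "C \<in> topspace ?T"
    have "\<phi> (t, C) \<subseteq> \<phi> (t, \<phi> (-t, C))" using mono[OF C inT[OF C] sup[OF C]] by blast
    also have "\<dots> = C" using g[OF C, of t "-t"] z C by simp
    finally show "\<phi> (t, C) = C" using sup C by blast
  qed
qed

end
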